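(* Let $g\ge 1$ and let $\Gamma_g$ be the chain of $g$ loops with edge lengths $\ell_1,m_1,\dots,\ell_g,m_g$ satisfying the genericity condition. Then there is no divisor $D$ on $\Gamma_g$ of rank $r(D)\ge 1$ such that $K_{\Gamma_g}-2D$ is linearly equivalent to an effective divisor. Equivalently, there is no pair $(D,E)$ of divisors on $\Gamma_g$ with $r(D)\ge 1$, $E$ effective and $2D+E\sim K_{\Gamma_g}$.
   Context: The metric graph $\Gamma_g$: it has vertices $v_0,v_1,\dots,v_g$, and for each $i=1,\dots,g$ two edges joining $v_{i-1}$ and $v_i$, of positive lengths $\ell_i$ and $m_i$. The union of these two edges is the $i$-th loop $\bar\gamma_i$, a circle of circumference $\ell_i+m_i$; consecutive loops $\bar\gamma_i,\bar\gamma_{i+1}$ meet only at $v_i$. Genericity condition: for each $i$, the ratio $\ell_i/m_i$ is not equal to $a/b$ for any positive integers $a,b$ with $a+b\le 2g-2$. A divisor on a metric graph $\Gamma$ is a finite formal $\mathbb Z$-linear combination of points of $\Gamma$; its degree is the sum of coefficients; it is effective if all coefficients are $\ge 0$. A piecewise linear function $\psi$ on $\Gamma$ is a continuous function which is linear with integer slope on each edge of some finite subdivision of $\Gamma$; $\mathrm{ord}_p(\psi)$ is the sum of the incoming slopes of $\psi$ along all edge directions at $p$, and $\mathrm{div}(\psi)=\sum_p \mathrm{ord}_p(\psi)\,p$. Two divisors $D,D'$ are linearly equivalent, $D\sim D'$, if $D-D'=\mathrm{div}(\psi)$ for some such $\psi$. The rank $r(D)$ is the largest integer $r$ such that $D-F$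 is linearly equivalent to an effective divisor for every effective divisor $F$ of degree $r$ ($r(D)=-1$ if $D$ is not equivalent to an effective divisor). The canonical divisor is $K_\Gamma=\sum_{v}(\mathrm{val}(v)-2)\,v$; for $\Gamma_g$ this is $K_{\Gamma_g}=2(v_1+\dots+v_{g-1})$, of degree $2g-2$. *)

theory Defs
  imports "HOL-Analysis.Analysis"
begin

text \<open>Loop i is parametrised by the circle [0, L i) with L i = l i + m i;
  position 0 is v_(i-1), position l i is v_i; the top edge is [0, l i],
  the bottom edge is [l i, L i] (with L i identified with 0).
  Points are represented canonically as pairs (i, t); the vertex v_i
  (1 <= i < g), which lies on loops i and i+1, is represented by (i+1, 0).\<close>

definition circ :: "(nat \<Rightarrow> real) \<Rightarrow> (nat \<Rightarrow> real) \<Rightarrow> nat \<Rightarrow> real" where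
  "circ l m i = l i + m i"

definition loc :: "nat \<Rightarrow> (nat \<Rightarrow> real) \<Rightarrow> nat \<Rightarrow> real \<Rightarrow> nat \<times> real" where
  "loc g l i t = (if i < g \<and> t = l i then (Suc i, 0) else (i, t))"

definition pos :: "nat \<Rightarrow> (nat \<Rightarrow> real) \<Rightarrow> (nat \<Rightarrow> real) \<Rightarrow> nat \<Rightarrow> real \<Rightarrow> nat \<times> real" where
  "pos g l m i x = loc g l i (if x = circ l m i then 0 else x)"

definition Pts :: "nat \<Rightarrow> (nat \<Rightarrow> real) \<Rightarrow> (nat \<Rightarrow> real) \<Rightarrow> (nat \<times> real) set" where
  "Pts g l m = {loc g l i t | i t. 1 \<le> i \<and> i \<le> g \<and> 0 \<le> t \<and> t < circ l m i}"

definition vtx :: "nat \<Rightarrow> (nat \<Rightarrow> real) \<Rightarrow> nat \<Rightarrow> nat \<times> real" where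
  "vtx g l i = (if i = 0 then (1, 0) else loc g l i (l i))"

definition generic_chain :: "nat \<Rightarrow> (nat \<Rightarrow> real) \<Rightarrow> (nat \<Rightarrow> real) \<Rightarrow> bool" where
  "generic_chain g l m \<longleftrightarrow>
     (\<forall>i\<in>{1..g}. 0 < l i \<and> 0 < m i \<and>
        (\<forall>a b :: nat. 0 < a \<and> 0 < b \<and> a + b \<le> 2 * g - 2 \<longrightarrow> l i / m i \<noteq> real a / real b))"

type_synonym divisor = "nat \<times> real \<Rightarrow> int"

definition is_divisor :: "nat \<Rightarrow> (nat \<Rightarrow> real) \<Rightarrow> (nat \<Rightarrow> real) \<Rightarrow> divisor \<Rightarrow> bool" where
  "is_divisor g l m D \<longleftrightarrow> finite {p. D p \<noteq> 0} \<and> {p. D p \<noteq> 0} \<subseteq> Pts g l m"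

definition deg :: "divisor \<Rightarrow> int" where
  "deg D = sum D {p. D p \<noteq> 0}"

definition effective :: "divisor \<Rightarrow> bool" where
  "effective D \<longleftrightarrow> (\<forall>p. 0 \<le> D p)"

text \<open>Piecewise linear functions with integer slopes: on every loop, the function
  x \<mapsto> psi (pos i x) on [0, circ i] is affine with integer slope on each piece of a
  finite subdivision. (Continuity on Gamma_g is automatic.)\<close>
definition is_PL :: "nat \<Rightarrow> (nat \<Rightarrow> real) \<Rightarrow> (nat \<Rightarrow> real) \<Rightarrow> (nat \<times> real \<Rightarrow> real) \<Rightarrow> bool" where
  "is_PL g l m \<psi> \<longleftrightarrow>
     (\<forall>i\<in>{1..g}. \<exists>xs :: real list.
        sorted_wrt (<) xs \<and> xs \<noteq> [] \<and> hd xs = 0 \<and> last xs = circ l m i \<and>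
        (\<forall>j. Suc j < length xs \<longrightarrow>
           (\<exists>(s::int) (c::real). \<forall>x\<in>{xs ! j .. xs ! Suc j}. \<psi> (pos g l m i x) = c + of_int s * x)))"

definition rslope :: "nat \<Rightarrow> (nat \<Rightarrow> real) \<Rightarrow> (nat \<Rightarrow> real) \<Rightarrow> (nat \<times> real \<Rightarrow> real) \<Rightarrow> nat \<Rightarrow> real \<Rightarrow> real" where
  "rslope g l m \<psi> i t = (THE s. ((\<lambda>x. \<psi> (pos g l m i x)) has_real_derivative s) (at_right t))"

definition lslope :: "nat \<Rightarrow> (nat \<Rightarrow> real) \<Rightarrow> (nat \<Rightarrow> real) \<Rightarrow> (nat \<times> real \<Rightarrow> real) \<Rightarrow> nat \<Rightarrow> real \<Rightarrow> real" where
  "lslope g l m \<psi> i t = (THE s. ((\<lambda>x. \<psi> (pos g l m i x)) has_real_derivative s)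
        (at_left (if t = 0 then circ l m i else t)))"

text \<open>ord_p(psi): sum of the incoming slopes along all edge directions at p.
  The directions at p correspond to the incidences (i,t) with loc i t = p,
  each contributing the two directions along loop i.\<close>
definition ord :: "nat \<Rightarrow> (nat \<Rightarrow> real) \<Rightarrow> (nat \<Rightarrow> real) \<Rightarrow> (nat \<times> real \<Rightarrow> real) \<Rightarrow> nat \<times> real \<Rightarrow> real" where
  "ord g l m \<psi> p =
     (\<Sum>(i, t) \<in> {(i, t). 1 \<le> i \<and> i \<le> g \<and> 0 \<le> t \<and> t < circ l m i \<and> loc g l i t = p}.
        lslope g l m \<psi> i t - rslope g l m \<psi> i t)"

definition lin_equiv :: "nat \<Rightarrow> (nat \<Rightarrow> real) \<Rightarrow> (nat \<Rightarrow> real) \<Rightarrow> divisor \<Rightarrow> divisor \<Rightarrow> bool" where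
  "lin_equiv g l m D D' \<longleftrightarrow>
     (\<exists>\<psi>. is_PL g l m \<psi> \<and> (\<forall>p\<in>Pts g l m. real_of_int (D p - D' p) = ord g l m \<psi> p))"

definition rank_ge :: "nat \<Rightarrow> (nat \<Rightarrow> real) \<Rightarrow> (nat \<Rightarrow> real) \<Rightarrow> divisor \<Rightarrow> nat \<Rightarrow> bool" where
  "rank_ge g l m D r \<longleftrightarrow>
     (\<forall>F. is_divisor g l m F \<and> effective F \<and> deg F = int r \<longrightarrow>
        (\<exists>E. is_divisor g l m E \<and> effective E \<and> lin_equiv g l m (\<lambda>p. D p - F p) E))"

definition rank :: "nat \<Rightarrow> (nat \<Rightarrow> real) \<Rightarrow> (nat \<Rightarrow> real) \<Rightarrow> divisor \<Rightarrow> int" where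
  "rank g l m D = (if rank_ge g l m D 0 then int (GREATEST r. rank_ge g l m D r) else -1)"

definition canonical :: "nat \<Rightarrow> (nat \<Rightarrow> real) \<Rightarrow> divisor" where
  "canonical g l p = (if \<exists>i\<in>{1..<g}. p = vtx g l i then 2 else 0)"

end

theory Submission
  imports Defs
begin

lemma affine_deriv_right:
  fixes f :: "real \<Rightarrow> real"
  assumes "a < b" "\<forall>x\<in>{a..b}. f x = c + s * x"
  shows "(f has_real_derivative s) (at_right a)"
proof -
  have "((\<lambda>x. c + s*x) has_real_derivative s) (at a within {a..b})"
    by (auto intro!: derivative_eq_intros)
  hence "(f has_real_derivative s) (at a within {a..b})"
    by (rule has_field_derivative_transform_within[where d=1]) (use assms in auto)
  thus ?thesis using at_within_Icc_at_right[OF assms(1)] by simp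
qed

lemma affine_deriv_left:
  fixes f :: "real \<Rightarrow> real"
  assumes "a < b" "\<forall>x\<in>{a..b}. f x = c + s * x"
  shows "(f has_real_derivative s) (at_left b)"
proof -
  have "((\<lambda>x. c + s*x) has_real_derivative s) (at b within {a..b})"
    by (auto intro!: derivative_eq_intros)
  hence "(f has_real_derivative s) (at b within {a..b})"
    by (rule has_field_derivative_transform_within[where d=1]) (use assms in auto)
  thus ?thesis using at_within_Icc_at_left[OF assms(1)] by simp
qed

lemma the_deriv_right:
  fixes f :: "real \<Rightarrow> real"
  assumes "(f has_real_derivative s) (at_right t)"
  shows "(THE s. (f has_real_derivative s) (at_right t)) = s"
  using assms by (auto intro!: the_equality dest: has_field_derivative_unique)

lemma the_deriv_left:
  fixes f :: "real \<Rightarrow> real"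
  assumes "(f has_real_derivative s) (at_left t)"
  shows "(THE s. (f has_real_derivative s) (at_left t)) = s"
  using assms by (auto intro!: the_equality dest: has_field_derivative_unique)

lemma loop_analysis:
  fixes f :: "real \<Rightarrow> real" and xs :: "real list" and n :: real
  assumes srt: "sorted_wrt (<) xs" and ne: "xs \<noteq> []" and hd0: "hd xs = 0" and lst: "last xs = n"
    and npos: "0 < n"
    and pc: "\<forall>j. Suc j < length xs \<longrightarrow> (\<exists>(s::int) (c::real). \<forall>x\<in>{xs!j..xs!Suc j}. f x = c + of_int s * x)"
    and wrap: "f n = f 0"
  defines "Rs \<equiv> \<lambda>t. THE s. (f has_real_derivative s) (at_right t)"
    and "Ls \<equiv> \<lambda>t. THE s. (f has_real_derivative s) (at_left (if t = 0 then n else t))"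
  shows "(\<forall>t. 0 \<le> t \<and> t < n \<and> t \<notin> set xs \<longrightarrow> Ls t - Rs t = 0)
     \<and> (\<Sum>t\<in>set xs - {n}. Ls t - Rs t) = 0
     \<and> (\<exists>z::int. (\<Sum>t\<in>set xs - {n}. (Ls t - Rs t) * t) = of_int z * n)"
proof -
  define N where "N = length xs - 1"
  define x where "x = (\<lambda>j. xs ! j)"
  have len: "length xs = Suc N"
  proof -
    have "length xs \<noteq> 1"
    proof
      assume "length xs = 1"
      then obtain a where "xs = [a]" by (cases xs) auto
      thus False using hd0 lst npos by simp
    qed
    moreover have "length xs \<noteq> 0" using ne by simp
    ultimately show ?thesis unfolding N_def by simp
  qed
  have N1: "1 \<le> N"
  proof (rule ccontr)
    assume "\<not> 1 \<le> N" hence "N = 0" by simp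
    then obtain a where "xs = [a]" using len by (cases xs) auto
    thus False using hd0 lst npos by simp
  qed
  have x0: "x 0 = 0" using hd0 ne unfolding x_def by (simp add: hd_conv_nth)
  have xN: "x N = n" using lst ne len unfolding x_def by (simp add: last_conv_nth)
  have mono: "\<And>i j. i < j \<Longrightarrow> j \<le> N \<Longrightarrow> x i < x j"
    using srt len unfolding x_def by (simp add: sorted_wrt_iff_nth_less)
  have monole: "\<And>i j. i \<le> j \<Longrightarrow> j \<le> N \<Longrightarrow> x i \<le> x j"
    using mono by (metis le_less order.refl)
  have "\<forall>j. \<exists>sc::int \<times> real. j < N \<longrightarrow> (\<forall>y\<in>{x j..x (Suc j)}. f y = snd sc + of_int (fst sc) * y)"
    using pc len unfolding x_def by fastforce
  then obtain SC where SC: "\<And>j. j < N \<Longrightarrow> (\<forall>y\<in>{x j..x (Suc j)}. f y = snd (SC j) + of_int (fst (SC j)) * y)"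
    by metis
  define S where "S = (\<lambda>j. real_of_int (fst (SC j)))"
  define C where "C = (\<lambda>j. snd (SC j))"
  have SCj: "\<And>j y. j < N \<Longrightarrow> x j \<le> y \<Longrightarrow> y \<le> x (Suc j) \<Longrightarrow> f y = C j + S j * y"
    using SC unfolding S_def C_def by auto
  have R1: "\<And>j t. j < N \<Longrightarrow> x j \<le> t \<Longrightarrow> t < x (Suc j) \<Longrightarrow> Rs t = S j"
  proof -
    fix j t assume a: "j < N" "x j \<le> t" "t < x (Suc j)"
    have "(f has_real_derivative S j) (at_right t)"
      by (rule affine_deriv_right[OF a(3), of _ "C j"]) (use SCj a in auto)
    thus "Rs t = S j" unfolding Rs_def by (rule the_deriv_right)
  qed
  have L1: "\<And>j t. j < N \<Longrightarrow> x j < t \<Longrightarrow> t \<le> x (Suc j) \<Longrightarrow> (f has_real_derivative S j) (at_left t)"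
  proof -
    fix j t assume a: "j < N" "x j < t" "t \<le> x (Suc j)"
    show "(f has_real_derivative S j) (at_left t)"
      by (rule affine_deriv_left[OF a(2), of _ "C j"]) (use SCj a in auto)
  qed
  have locate: "\<And>t. 0 \<le> t \<Longrightarrow> t < n \<Longrightarrow> \<exists>j<N. x j \<le> t \<and> t < x (Suc j)"
  proof -
    fix t assume t: "0 \<le> t" "t < n"
    define A where "A = {j. j \<le> N \<and> x j \<le> t}"
    have finA: "finite A" unfolding A_def by simp
    have "0 \<in> A" unfolding A_def using x0 t by simp
    hence neA: "A \<noteq> {}" by auto
    define J where "J = Max A"
    have JA: "J \<in> A" unfolding J_def using finA neA by simp
    have JN: "J < N"
    proof -
      have "J \<le> N" "x J \<le> t" using JA unfolding A_def by auto
      moreover have "J \<noteq> N" using \<open>x J \<le> t\<close> xN t by auto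
      ultimately show ?thesis by simp
    qed
    have "t < x (Suc J)"
    proof (rule ccontr)
      assume "\<not> t < x (Suc J)"
      hence "Suc J \<in> A" unfolding A_def using JN by simp
      hence "Suc J \<le> J" unfolding J_def using finA by simp
      thus False by simp
    qed
    thus "\<exists>j<N. x j \<le> t \<and> t < x (Suc j)" using JN JA unfolding A_def by auto
  qed
  have setxs: "set xs = x ` {..N}"
    using len unfolding x_def by (auto simp: set_conv_nth image_def less_Suc_eq_le)
  have setxs': "set xs - {n} = x ` {..<N}"
  proof -
    have "x ` {..N} = insert (x N) (x ` {..<N})" by (simp add: lessThan_Suc_atMost[symmetric] lessThan_Suc)
    moreover have "x N \<notin> x ` {..<N}" using mono by (auto dest: mono[of _ N] simp: less_imp_neq)
    ultimately show ?thesis using setxs xN by auto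
  qed
  have injx: "inj_on x {..<N}"
  proof (rule inj_onI)
    fix i j assume "i \<in> {..<N}" "j \<in> {..<N}" "x i = x j"
    thus "i = j" using mono by (metis lessThan_iff less_imp_le_nat linorder_neqE_nat order.strict_iff_not)
  qed
  define P where "P = (\<lambda>j. if j = 0 then S (N - 1) else S (j - 1))"
  have oval: "\<And>j. j < N \<Longrightarrow> Ls (x j) - Rs (x j) = P j - S j"
  proof -
    fix j assume j: "j < N"
    have r: "Rs (x j) = S j" using R1[OF j] mono[of j "Suc j"] j by simp
    have l: "Ls (x j) = P j"
    proof (cases "j = 0")
      case True
      have "(f has_real_derivative S (N-1)) (at_left n)"
        using L1[of "N-1" n] N1 mono[of "N-1" N] xN by simp
      thus ?thesis unfolding Ls_def P_def using True x0 by (simp add: the_deriv_left)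
    next
      case False
      have xj: "x j \<noteq> 0" using mono[of 0 j] x0 j False by simp
      have "(f has_real_derivative S (j-1)) (at_left (x j))"
        using L1[of "j-1" "x j"] False j mono[of "j-1" j] by simp
      thus ?thesis unfolding Ls_def P_def using False xj by (simp add: the_deriv_left)
    qed
    show "Ls (x j) - Rs (x j) = P j - S j" using r l by simp
  qed
  have part1: "\<forall>t. 0 \<le> t \<and> t < n \<and> t \<notin> set xs \<longrightarrow> Ls t - Rs t = 0"
  proof (intro allI impI)
    fix t assume t: "0 \<le> t \<and> t < n \<and> t \<notin> set xs"
    then obtain j where j: "j < N" "x j \<le> t" "t < x (Suc j)" using locate by blast
    have "t \<noteq> x j" using t j setxs by auto
    hence lt: "x j < t" using j by simp
    have t0: "t \<noteq> 0" using lt x0 monole[of 0 j] j by simp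
    have "Ls t = S j" unfolding Ls_def using t0 L1[OF j(1) lt] j by (simp add: the_deriv_left)
    moreover have "Rs t = S j" using R1 j by simp
    ultimately show "Ls t - Rs t = 0" by simp
  qed
  obtain M where M: "N = Suc M" using N1 by (cases N) auto
  have sumP: "(\<Sum>j<N. P j) = (\<Sum>j<N. S j)"
  proof -
    have "(\<Sum>j<Suc M. P j) = P 0 + (\<Sum>j<M. P (Suc j))" by (rule sum.lessThan_Suc_shift)
    also have "\<dots> = S M + (\<Sum>j<M. S j)" unfolding P_def M by simp
    also have "\<dots> = (\<Sum>j<Suc M. S j)" by simp
    finally show ?thesis unfolding M .
  qed
  have part2: "(\<Sum>t\<in>set xs - {n}. Ls t - Rs t) = 0"
  proof -
    have "(\<Sum>t\<in>set xs - {n}. Ls t - Rs t) = (\<Sum>j<N. Ls (x j) - Rs (x j))"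
      unfolding setxs' by (simp add: sum.reindex[OF injx])
    also have "\<dots> = (\<Sum>j<N. P j - S j)" by (rule sum.cong) (auto simp: oval)
    also have "\<dots> = 0" using sumP by (simp add: sum_subtractf)
    finally show ?thesis .
  qed
  have part3: "\<exists>z::int. (\<Sum>t\<in>set xs - {n}. (Ls t - Rs t) * t) = of_int z * n"
  proof -
    have "(\<Sum>t\<in>set xs - {n}. (Ls t - Rs t) * t) = (\<Sum>j<N. (Ls (x j) - Rs (x j)) * x j)"
      unfolding setxs' by (simp add: sum.reindex[OF injx])
    also have "\<dots> = (\<Sum>j<N. (P j - S j) * x j)" by (rule sum.cong) (auto simp: oval)
    also have "\<dots> = (\<Sum>j<N. P j * x j) - (\<Sum>j<N. S j * x j)"
      by (simp add: sum_subtractf left_diff_distrib)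
    also have "(\<Sum>j<N. P j * x j) = (\<Sum>j<M. S j * x (Suc j))"
    proof -
      have "(\<Sum>j<Suc M. P j * x j) = P 0 * x 0 + (\<Sum>j<M. P (Suc j) * x (Suc j))"
        by (rule sum.lessThan_Suc_shift)
      also have "\<dots> = (\<Sum>j<M. S j * x (Suc j))" unfolding P_def M using x0 by simp
      finally show ?thesis unfolding M .
    qed
    also have "\<dots> = (\<Sum>j<N. S j * x (Suc j)) - S M * n"
      unfolding M using xN M by (simp add: sum.lessThan_Suc)
    finally have e1: "(\<Sum>t\<in>set xs - {n}. (Ls t - Rs t) * t)
        = (\<Sum>j<N. S j * (x (Suc j) - x j)) - S M * n"
      by (simp add: sum_subtractf right_diff_distrib)
    have "(\<Sum>j<N. S j * (x (Suc j) - x j)) = (\<Sum>j<N. f (x (Suc j)) - f (x j))"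
    proof (rule sum.cong)
      fix j assume "j \<in> {..<N}"
      hence j: "j < N" by simp
      have a: "x j \<le> x (Suc j)" using monole[of j "Suc j"] j by simp
      have "f (x (Suc j)) = C j + S j * x (Suc j)" using SCj[OF j a] by simp
      moreover have "f (x j) = C j + S j * x j" using SCj[OF j order.refl a] by simp
      ultimately show "S j * (x (Suc j) - x j) = f (x (Suc j)) - f (x j)"
        by (simp add: algebra_simps)
    qed simp
    also have "\<dots> = f (x N) - f (x 0)" by (rule sum_lessThan_telescope)
    also have "\<dots> = 0" using xN x0 wrap by simp
    finally have "(\<Sum>t\<in>set xs - {n}. (Ls t - Rs t) * t) = of_int (- fst (SC M)) * n"
      using e1 unfolding S_def by simp
    thus ?thesis by blast
  qed
  show ?thesis using part1 part2 part3 by blast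
qed


definition incord :: "nat \<Rightarrow> (nat \<Rightarrow> real) \<Rightarrow> (nat \<Rightarrow> real) \<Rightarrow> (nat \<times> real \<Rightarrow> real) \<Rightarrow> nat \<times> real \<Rightarrow> real" where
  "incord g l m \<psi> x = lslope g l m \<psi> (fst x) (snd x) - rslope g l m \<psi> (fst x) (snd x)"

definition Inc :: "nat \<Rightarrow> (nat \<Rightarrow> real) \<Rightarrow> (nat \<Rightarrow> real) \<Rightarrow> nat \<times> real \<Rightarrow> (nat \<times> real) set" where
  "Inc g l m p = {(i, t). 1 \<le> i \<and> i \<le> g \<and> 0 \<le> t \<and> t < circ l m i \<and> loc g l i t = p}"

definition proj :: "(nat \<Rightarrow> real) \<Rightarrow> nat \<Rightarrow> nat \<times> real \<Rightarrow> real" where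
  "proj l j p = (if fst p < j then 0 else if fst p = j then snd p else l j)"

lemma proj_loc: "proj l j (loc g l i t) = (if i < j then 0 else if i = j then t else l j)"
proof (cases "i < g \<and> t = l i")
  case True
  hence "fst (loc g l i t) = Suc i" "snd (loc g l i t) = 0" unfolding loc_def by simp_all
  thus ?thesis unfolding proj_def using True by (cases "i < j"; cases "Suc i < j"; simp)
next
  case False
  hence e: "loc g l i t = (i, t)" unfolding loc_def by simp
  show ?thesis unfolding e proj_def by simp
qed

lemma ord_Inc: "ord g l m \<psi> p = (\<Sum>x\<in>Inc g l m p. incord g l m \<psi> x)"
  unfolding ord_def Inc_def incord_def by (simp add: case_prod_beta)

lemma finite_Inc: "finite (Inc g l m p)"
proof -
  have "Inc g l m p \<subseteq> {(fst p, snd p), (fst p - 1, l (fst p - 1))}"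
  proof
    fix x assume "x \<in> Inc g l m p"
    then obtain i t where x: "x = (i, t)" "loc g l i t = p" unfolding Inc_def by auto
    have "loc g l i t = (i, t) \<or> (t = l i \<and> loc g l i t = (Suc i, 0))"
      unfolding loc_def by simp
    thus "x \<in> {(fst p, snd p), (fst p - 1, l (fst p - 1))}" using x by auto
  qed
  thus ?thesis by (rule finite_subset) simp
qed

lemma loop_B:
  assumes PL: "is_PL g l m \<psi>" and i: "i \<in> {1..g}" and pos: "0 < l i" "0 < m i"
  shows "\<exists>B. finite B \<and> B \<subseteq> {0..<circ l m i}
     \<and> (\<forall>t. 0 \<le> t \<and> t < circ l m i \<and> t \<notin> B \<longrightarrow> incord g l m \<psi> (i, t) = 0)
     \<and> (\<Sum>t\<in>B. incord g l m \<psi> (i, t)) = 0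
     \<and> (\<exists>z::int. (\<Sum>t\<in>B. incord g l m \<psi> (i, t) * t) = of_int z * circ l m i)"
proof -
  obtain xs where xs: "sorted_wrt (<) xs" "xs \<noteq> []" "hd xs = 0" "last xs = circ l m i"
    "\<forall>j. Suc j < length xs \<longrightarrow>
           (\<exists>(s::int) (c::real). \<forall>x\<in>{xs ! j .. xs ! Suc j}. \<psi> (pos g l m i x) = c + of_int s * x)"
    using PL i unfolding is_PL_def by blast
  have npos: "0 < circ l m i" using pos unfolding circ_def by simp
  have wrap: "(\<lambda>x. \<psi> (pos g l m i x)) (circ l m i) = (\<lambda>x. \<psi> (pos g l m i x)) 0"
    using npos unfolding pos_def by simp
  note LA = loop_analysis[OF xs(1-4) npos xs(5)[unfolded] wrap]
  have setb: "set xs \<subseteq> {0..circ l m i}"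
  proof
    fix t assume t: "t \<in> set xs"
    then obtain k where k: "k < length xs" "t = xs ! k" by (auto simp: in_set_conv_nth)
    have lt: "\<And>a b. a < b \<Longrightarrow> b < length xs \<Longrightarrow> xs ! a < xs ! b"
      using xs(1) by (simp add: sorted_wrt_iff_nth_less)
    have "xs ! 0 \<le> xs ! k"
    proof (cases "k = 0")
      case False thus ?thesis using lt[of 0 k] k by simp
    qed simp
    moreover have "xs ! k \<le> xs ! (length xs - 1)"
    proof (cases "k = length xs - 1")
      case False
      hence "k < length xs - 1" using k by simp
      moreover have "length xs - 1 < length xs" using k by simp
      ultimately show ?thesis using lt[of k "length xs - 1"] by simp
    qed simp
    ultimately show "t \<in> {0..circ l m i}" using xs(2,3,4) k by (simp add: hd_conv_nth last_conv_nth)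
  qed
  have io: "\<And>t. incord g l m \<psi> (i, t) = (THE s. ((\<lambda>x. \<psi> (pos g l m i x)) has_real_derivative s)
        (at_left (if t = 0 then circ l m i else t))) - (THE s. ((\<lambda>x. \<psi> (pos g l m i x)) has_real_derivative s) (at_right t))"
    unfolding incord_def lslope_def rslope_def by simp
  define B where "B = set xs - {circ l m i}"
  have "finite B" unfolding B_def by simp
  moreover have "B \<subseteq> {0..<circ l m i}" using setb unfolding B_def by auto
  moreover have "\<forall>t. 0 \<le> t \<and> t < circ l m i \<and> t \<notin> B \<longrightarrow> incord g l m \<psi> (i, t) = 0"
    using LA unfolding B_def io by auto
  moreover have "(\<Sum>t\<in>B. incord g l m \<psi> (i, t)) = 0"
    using LA unfolding B_def io by auto
  moreover have "\<exists>z::int. (\<Sum>t\<in>B. incord g l m \<psi> (i, t) * t) = of_int z * circ l m i"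
    using LA unfolding B_def io by auto
  ultimately show ?thesis by blast
qed

lemma ord_sum_general:
  assumes PL: "is_PL g l m \<psi>" and pos: "\<forall>i\<in>{1..g}. 0 < l i \<and> 0 < m i"
    and fin: "finite S" and SP: "S \<subseteq> Pts g l m" and z: "\<forall>p\<in>Pts g l m - S. ord g l m \<psi> p = 0"
  shows "(\<Sum>p\<in>S. ord g l m \<psi> p) = 0 \<and>
    (\<forall>j\<in>{1..g}. \<exists>z::int. (\<Sum>p\<in>S. ord g l m \<psi> p * proj l j p) = of_int z * circ l m j)"
proof -
  define Q where "Q = (\<lambda>i B. finite B \<and> B \<subseteq> {0..<circ l m i}
     \<and> (\<forall>t. 0 \<le> t \<and> t < circ l m i \<and> t \<notin> B \<longrightarrow> incord g l m \<psi> (i, t) = 0)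
     \<and> (\<Sum>t\<in>B. incord g l m \<psi> (i, t)) = 0
     \<and> (\<exists>z::int. (\<Sum>t\<in>B. incord g l m \<psi> (i, t) * t) = of_int z * circ l m i))"
  have "\<forall>i\<in>{1..g}. \<exists>B. Q i B"
    unfolding Q_def using loop_B[OF PL] pos by blast
  hence "\<exists>B. \<forall>i\<in>{1..g}. Q i (B i)" by (rule bchoice)
  then obtain B where B0: "\<forall>i\<in>{1..g}. Q i (B i)" by blast
  have B: "finite (B i) \<and> B i \<subseteq> {0..<circ l m i}
     \<and> (\<forall>t. 0 \<le> t \<and> t < circ l m i \<and> t \<notin> B i \<longrightarrow> incord g l m \<psi> (i, t) = 0)
     \<and> (\<Sum>t\<in>B i. incord g l m \<psi> (i, t)) = 0
     \<and> (\<exists>z::int. (\<Sum>t\<in>B i. incord g l m \<psi> (i, t) * t) = of_int z * circ l m i)" if "i \<in> {1..g}" for i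
    using B0 that unfolding Q_def by blast
  define Bset where "Bset = Sigma {1..g} B"
  have finB: "finite Bset" unfolding Bset_def using B by auto
  define L where "L = (\<lambda>x. loc g l (fst x) (snd x))"
  define S' where "S' = S \<union> L ` Bset"
  have finS': "finite S'" unfolding S'_def using fin finB by simp
  have LP: "L ` Bset \<subseteq> Pts g l m"
  proof
    fix p assume "p \<in> L ` Bset"
    then obtain i t where it: "i \<in> {1..g}" "t \<in> B i" "p = loc g l i t" unfolding L_def Bset_def by auto
    hence "0 \<le> t \<and> t < circ l m i" using B[OF it(1)] by auto
    thus "p \<in> Pts g l m" unfolding Pts_def using it by auto
  qed
  have key: "\<And>\<phi>. (\<Sum>p\<in>S. ord g l m \<psi> p * \<phi> p) =
      (\<Sum>i\<in>{1..g}. \<Sum>t\<in>B i. incord g l m \<psi> (i, t) * \<phi> (loc g l i t))"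
  proof -
    fix \<phi> :: "nat \<times> real \<Rightarrow> real"
    have "(\<Sum>p\<in>S. ord g l m \<psi> p * \<phi> p) = (\<Sum>p\<in>S'. ord g l m \<psi> p * \<phi> p)"
      by (rule sum.mono_neutral_left) (use finS' z LP SP in \<open>auto simp: S'_def\<close>)
    also have "\<dots> = (\<Sum>p\<in>S'. \<Sum>x\<in>Inc g l m p. incord g l m \<psi> x * \<phi> (L x))"
    proof (rule sum.cong)
      fix p assume "p \<in> S'"
      have "ord g l m \<psi> p * \<phi> p = (\<Sum>x\<in>Inc g l m p. incord g l m \<psi> x * \<phi> p)"
        unfolding ord_Inc by (simp add: sum_distrib_right)
      also have "\<dots> = (\<Sum>x\<in>Inc g l m p. incord g l m \<psi> x * \<phi> (L x))"
        by (rule sum.cong) (auto simp: Inc_def L_def)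
      finally show "ord g l m \<psi> p * \<phi> p = (\<Sum>x\<in>Inc g l m p. incord g l m \<psi> x * \<phi> (L x))" .
    qed simp
    also have "\<dots> = (\<Sum>x\<in>(\<Union>p\<in>S'. Inc g l m p). incord g l m \<psi> x * \<phi> (L x))"
      by (rule sum.UNION_disjoint[symmetric]) (use finS' finite_Inc in \<open>auto simp: Inc_def\<close>)
    also have "\<dots> = (\<Sum>x\<in>Bset. incord g l m \<psi> x * \<phi> (L x))"
    proof (rule sum.mono_neutral_right)
      show "finite (\<Union>p\<in>S'. Inc g l m p)" using finS' finite_Inc by simp
      show "Bset \<subseteq> (\<Union>p\<in>S'. Inc g l m p)"
      proof
        fix x assume x: "x \<in> Bset"
        then obtain i t where it: "x = (i, t)" "i \<in> {1..g}" "t \<in> B i" unfolding Bset_def by auto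
        hence "0 \<le> t \<and> t < circ l m i" using B[OF it(2)] by auto
        hence "x \<in> Inc g l m (L x)" unfolding Inc_def L_def using it by auto
        moreover have "L x \<in> S'" unfolding S'_def using x by auto
        ultimately show "x \<in> (\<Union>p\<in>S'. Inc g l m p)" by auto
      qed
      show "\<forall>x\<in>(\<Union>p\<in>S'. Inc g l m p) - Bset. incord g l m \<psi> x * \<phi> (L x) = 0"
      proof
        fix x assume x: "x \<in> (\<Union>p\<in>S'. Inc g l m p) - Bset"
        then obtain i t where it: "x = (i, t)" "1 \<le> i" "i \<le> g" "0 \<le> t" "t < circ l m i"
          unfolding Inc_def by auto
        have "t \<notin> B i" using x it unfolding Bset_def by auto
        hence "incord g l m \<psi> x = 0" using B[of i] it by auto
        thus "incord g l m \<psi> x * \<phi> (L x) = 0" by simp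
      qed
    qed
    also have "\<dots> = (\<Sum>i\<in>{1..g}. \<Sum>t\<in>B i. incord g l m \<psi> (i, t) * \<phi> (loc g l i t))"
      unfolding Bset_def L_def
    proof -
      have "(\<Sum>x\<in>Sigma {1..g} B. incord g l m \<psi> x * \<phi> (loc g l (fst x) (snd x)))
          = (\<Sum>(i,t)\<in>Sigma {1..g} B. incord g l m \<psi> (i, t) * \<phi> (loc g l i t))"
        by (rule sum.cong) auto
      also have "\<dots> = (\<Sum>i\<in>{1..g}. \<Sum>t\<in>B i. incord g l m \<psi> (i, t) * \<phi> (loc g l i t))"
        by (rule sum.Sigma[symmetric]) (use B in auto)
      finally show "(\<Sum>x\<in>Sigma {1..g} B. incord g l m \<psi> x * \<phi> (loc g l (fst x) (snd x)))
          = (\<Sum>i\<in>{1..g}. \<Sum>t\<in>B i. incord g l m \<psi> (i, t) * \<phi> (loc g l i t))" .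
    qed
    finally show "(\<Sum>p\<in>S. ord g l m \<psi> p * \<phi> p) =
      (\<Sum>i\<in>{1..g}. \<Sum>t\<in>B i. incord g l m \<psi> (i, t) * \<phi> (loc g l i t))" .
  qed
  have p1: "(\<Sum>p\<in>S. ord g l m \<psi> p) = 0"
    proof -
    have "(\<Sum>p\<in>S. ord g l m \<psi> p * 1) = (\<Sum>i\<in>{1..g}. \<Sum>t\<in>B i. incord g l m \<psi> (i, t) * 1)"
      by (rule key)
    also have "\<dots> = (\<Sum>i\<in>{1..g}. 0)" by (rule sum.cong) (use B in simp_all)
    finally show ?thesis by simp
  qed
  have p2: "\<exists>z::int. (\<Sum>p\<in>S. ord g l m \<psi> p * proj l j p) = of_int z * circ l m j" if j: "j \<in> {1..g}" for j
  proof -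
    obtain z where zj: "(\<Sum>t\<in>B j. incord g l m \<psi> (j, t) * t) = of_int z * circ l m j"
      using B[OF j] by blast
    have "(\<Sum>p\<in>S. ord g l m \<psi> p * proj l j p)
        = (\<Sum>i\<in>{1..g}. if i = j then of_int z * circ l m j else 0)"
    proof -
      have "(\<Sum>p\<in>S. ord g l m \<psi> p * proj l j p)
        = (\<Sum>i\<in>{1..g}. \<Sum>t\<in>B i. incord g l m \<psi> (i, t) * proj l j (loc g l i t))" by (rule key)
      also have "\<dots> = (\<Sum>i\<in>{1..g}. if i = j then of_int z * circ l m j else 0)"
      proof (rule sum.cong)
        fix i assume i: "i \<in> {1..g}"
        show "(\<Sum>t\<in>B i. incord g l m \<psi> (i, t) * proj l j (loc g l i t))
           = (if i = j then of_int z * circ l m j else 0)"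
        proof (cases "i < j")
          case True thus ?thesis by (simp add: proj_loc)
        next
          case False
          show ?thesis
          proof (cases "i = j")
            case True thus ?thesis using zj by (simp add: proj_loc)
          next
            case ne: False
            have "(\<Sum>t\<in>B i. incord g l m \<psi> (i, t) * proj l j (loc g l i t))
                = (\<Sum>t\<in>B i. incord g l m \<psi> (i, t)) * l j"
              using False ne by (simp add: proj_loc sum_distrib_right)
            also have "\<dots> = 0" using B[OF i] by simp
            finally show ?thesis using ne by simp
          qed
        qed
      qed simp
      finally show ?thesis .
    qed
    also have "\<dots> = of_int z * circ l m j" using j by simp
    finally show ?thesis by blast
  qed
  show ?thesis using p1 p2 by blast
qed


definition supp :: "divisor \<Rightarrow> (nat \<times> real) set" where
  "supp X = {p. X p \<noteq> 0}"

definition Aj :: "(nat \<Rightarrow> real) \<Rightarrow> nat \<Rightarrow> divisor \<Rightarrow> real" where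
  "Aj l j X = (\<Sum>p\<in>supp X. real_of_int (X p) * proj l j p)"

definition congr :: "(nat \<Rightarrow> real) \<Rightarrow> (nat \<Rightarrow> real) \<Rightarrow> nat \<Rightarrow> real \<Rightarrow> real \<Rightarrow> bool" where
  "congr l m j x y \<longleftrightarrow> (\<exists>z::int. x - y = of_int z * circ l m j)"

lemma congr_refl: "congr l m j x x"
  unfolding congr_def by (rule exI[of _ 0]) simp

lemma congr_sym: "congr l m j x y \<Longrightarrow> congr l m j y x"
  unfolding congr_def by (metis add.inverse_inverse minus_diff_eq mult_minus_left of_int_minus)

lemma congr_trans: "congr l m j x y \<Longrightarrow> congr l m j y w \<Longrightarrow> congr l m j x w"
proof -
  assume "congr l m j x y" "congr l m j y w"
  then obtain a b :: int where "x - y = a * circ l m j" "y - w = b * circ l m j" unfolding congr_def by blast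
  hence "x - w = of_int (a + b) * circ l m j" by (simp add: algebra_simps)
  thus ?thesis unfolding congr_def by blast
qed

lemma congr_diff: "congr l m j x y \<longleftrightarrow> congr l m j (x - c) (y - c)"
  unfolding congr_def by simp

lemma congr_double: "congr l m j x y \<Longrightarrow> congr l m j (2 * x) (2 * y)"
proof -
  assume "congr l m j x y"
  then obtain a :: int where "x - y = a * circ l m j" unfolding congr_def by blast
  hence "2 * x - 2 * y = of_int (2 * a) * circ l m j" by (simp add: algebra_simps)
  thus ?thesis unfolding congr_def by blast
qed

lemma sum_supp_superset:
  assumes "finite S" "supp X \<subseteq> S"
  shows "deg X = (\<Sum>p\<in>S. X p)" "Aj l j X = (\<Sum>p\<in>S. real_of_int (X p) * proj l j p)"
proof -
  show "deg X = (\<Sum>p\<in>S. X p)" unfolding deg_def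
    by (rule sum.mono_neutral_left) (use assms in \<open>auto simp: supp_def\<close>)
  show "Aj l j X = (\<Sum>p\<in>S. real_of_int (X p) * proj l j p)" unfolding Aj_def
    by (rule sum.mono_neutral_left) (use assms in \<open>auto simp: supp_def\<close>)
qed

lemma lincomb:
  assumes "finite (supp X)" "finite (supp Y)"
  shows "deg (\<lambda>p. a * X p + b * Y p) = a * deg X + b * deg Y"
    "Aj l j (\<lambda>p. a * X p + b * Y p) = of_int a * Aj l j X + of_int b * Aj l j Y"
proof -
  let ?S = "supp X \<union> supp Y"
  have f: "finite ?S" using assms by simp
  have s: "supp (\<lambda>p. a * X p + b * Y p) \<subseteq> ?S" unfolding supp_def by auto
  have sx: "supp X \<subseteq> ?S" and sy: "supp Y \<subseteq> ?S" by auto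
  show "deg (\<lambda>p. a * X p + b * Y p) = a * deg X + b * deg Y"
    unfolding sum_supp_superset(1)[OF f s] sum_supp_superset(1)[OF f sx] sum_supp_superset(1)[OF f sy]
    by (simp add: sum.distrib sum_distrib_left)
  show "Aj l j (\<lambda>p. a * X p + b * Y p) = of_int a * Aj l j X + of_int b * Aj l j Y"
    unfolding sum_supp_superset(2)[OF f s] sum_supp_superset(2)[OF f sx] sum_supp_superset(2)[OF f sy]
    by (simp add: sum.distrib sum_distrib_left algebra_simps)
qed

lemma lin_equiv_inv:
  assumes pos: "\<forall>i\<in>{1..g}. 0 < l i \<and> 0 < m i"
    and X: "is_divisor g l m X" and Y: "is_divisor g l m Y" and le: "lin_equiv g l m X Y"
  shows "deg X = deg Y" "\<And>j. j \<in> {1..g} \<Longrightarrow> congr l m j (Aj l j X) (Aj l j Y)"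
proof -
  obtain \<psi> where PL: "is_PL g l m \<psi>" and eq: "\<forall>p\<in>Pts g l m. real_of_int (X p - Y p) = ord g l m \<psi> p"
    using le unfolding lin_equiv_def by blast
  let ?S = "supp X \<union> supp Y"
  have f: "finite ?S" and SP: "?S \<subseteq> Pts g l m" using X Y unfolding is_divisor_def supp_def by auto
  have sx: "supp X \<subseteq> ?S" and sy: "supp Y \<subseteq> ?S" by auto
  have z: "\<forall>p\<in>Pts g l m - ?S. ord g l m \<psi> p = 0" using eq unfolding supp_def by force
  note OS = ord_sum_general[OF PL pos f SP z]
  have "real_of_int (deg X - deg Y) = (\<Sum>p\<in>?S. real_of_int (X p - Y p))"
    unfolding sum_supp_superset(1)[OF f sx] sum_supp_superset(1)[OF f sy]
    by (simp add: sum_subtractf)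
  also have "\<dots> = (\<Sum>p\<in>?S. ord g l m \<psi> p)" by (rule sum.cong) (use eq SP in auto)
  also have "\<dots> = 0" using OS by simp
  finally show "deg X = deg Y" by simp
  fix j assume j: "j \<in> {1..g}"
  obtain z :: int where zj: "(\<Sum>p\<in>?S. ord g l m \<psi> p * proj l j p) = of_int z * circ l m j"
    using OS j by blast
  have "Aj l j X - Aj l j Y = (\<Sum>p\<in>?S. real_of_int (X p - Y p) * proj l j p)"
    unfolding sum_supp_superset(2)[OF f sx] sum_supp_superset(2)[OF f sy]
    by (simp add: sum_subtractf left_diff_distrib)
  also have "\<dots> = (\<Sum>p\<in>?S. ord g l m \<psi> p * proj l j p)" by (rule sum.cong) (use eq SP in auto)
  finally show "congr l m j (Aj l j X) (Aj l j Y)" unfolding congr_def using zj by auto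
qed


definition Rc :: "divisor \<Rightarrow> nat \<Rightarrow> int" where
  "Rc E j = (\<Sum>p\<in>supp E \<inter> {p. j < fst p}. E p)"

definition ec :: "divisor \<Rightarrow> nat \<Rightarrow> int" where
  "ec E j = (\<Sum>p\<in>supp E \<inter> {p. fst p = j}. E p)"

lemma fst_Pts: "p \<in> Pts g l m \<Longrightarrow> 1 \<le> fst p \<and> fst p \<le> g"
proof -
  assume "p \<in> Pts g l m"
  then obtain i t where it: "1 \<le> i" "i \<le> g" "p = loc g l i t" unfolding Pts_def by blast
  have "loc g l i t = (i, t) \<or> (i < g \<and> loc g l i t = (Suc i, 0))" unfolding loc_def by simp
  thus ?thesis using it by auto
qed

context
  fixes g l m E
  assumes ED: "is_divisor g l m E" and EE: "effective E"
begin

lemma finE: "finite (supp E)" using ED unfolding is_divisor_def supp_def by simp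

lemma nonnegE: "0 \<le> E p" using EE unfolding effective_def by blast

lemma Rc0: "Rc E 0 = deg E"
proof -
  have "supp E \<inter> {p. 0 < fst p} = supp E"
    using ED fst_Pts unfolding is_divisor_def supp_def by fastforce
  thus ?thesis unfolding Rc_def deg_def supp_def by simp
qed

lemma Rc_step: "1 \<le> j \<Longrightarrow> Rc E (j - 1) = Rc E j + ec E j"
proof -
  assume j: "1 \<le> j"
  have "supp E \<inter> {p. j - 1 < fst p} = (supp E \<inter> {p. j < fst p}) \<union> (supp E \<inter> {p. fst p = j})"
    using j by auto
  moreover have "(supp E \<inter> {p. j < fst p}) \<inter> (supp E \<inter> {p. fst p = j}) = {}" by auto
  ultimately show ?thesis unfolding Rc_def ec_def using finE by (simp add: sum.union_disjoint)
qed

lemma Rc_nonneg: "0 \<le> Rc E j" unfolding Rc_def by (rule sum_nonneg) (simp add: nonnegE)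

lemma ec_nonneg: "0 \<le> ec E j" unfolding ec_def by (rule sum_nonneg) (simp add: nonnegE)

lemma deg_nonneg: "0 \<le> deg E" unfolding deg_def by (rule sum_nonneg) (simp add: nonnegE)

lemma Aj_ec0: assumes "ec E j = 0" shows "Aj l j E = l j * of_int (Rc E j)"
proof -
  have none: "\<forall>p\<in>supp E. fst p \<noteq> j"
  proof
    fix p assume p: "p \<in> supp E"
    have "\<forall>q\<in>supp E \<inter> {p. fst p = j}. E q = 0"
      using assms finE unfolding ec_def by (subst sum_nonneg_eq_0_iff[symmetric]) (auto simp: nonnegE)
    thus "fst p \<noteq> j" using p unfolding supp_def by (metis (mono_tags, lifting) IntI mem_Collect_eq)
  qed
  have "Aj l j E = (\<Sum>p\<in>supp E. if j < fst p then real_of_int (E p) * l j else 0)"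
    unfolding Aj_def by (rule sum.cong) (use none in \<open>auto simp: proj_def\<close>)
  also have "\<dots> = (\<Sum>p\<in>supp E \<inter> {p. j < fst p}. real_of_int (E p) * l j)"
    using finE by (simp add: sum.inter_restrict)
  also have "\<dots> = l j * of_int (Rc E j)" unfolding Rc_def by (simp add: sum_distrib_left mult.commute)
  finally show ?thesis .
qed

end


definition stp :: "nat \<Rightarrow> (nat \<Rightarrow> real) \<Rightarrow> (nat \<Rightarrow> real) \<Rightarrow> (nat \<Rightarrow> real) \<Rightarrow> nat \<Rightarrow> int \<Rightarrow> int" where
  "stp g l m \<eta> h v = v + (if congr l m (g - h) (\<eta> (g - h)) (l (g - h) * of_int v) then 0 else 1)"

fun rf :: "nat \<Rightarrow> (nat \<Rightarrow> real) \<Rightarrow> (nat \<Rightarrow> real) \<Rightarrow> (nat \<Rightarrow> real) \<Rightarrow> int \<Rightarrow> nat \<Rightarrow> nat \<Rightarrow> int" where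
  "rf g l m \<eta> v a 0 = v"
| "rf g l m \<eta> v a (Suc j) = stp g l m \<eta> (a + j) (rf g l m \<eta> v a j)"

fun wr :: "nat \<Rightarrow> (nat \<Rightarrow> real) \<Rightarrow> (nat \<Rightarrow> real) \<Rightarrow> (nat \<Rightarrow> real) \<Rightarrow> nat \<Rightarrow> int" where
  "wr g l m \<xi> 0 = 1"
| "wr g l m \<xi> (Suc h) = max (stp g l m \<xi> h (wr g l m \<xi> h)) (rf g l m \<xi> 0 0 h + 2)"

lemma stp_bounds: "v \<le> stp g l m \<eta> h v" "stp g l m \<eta> h v \<le> v + 1"
  unfolding stp_def by auto

lemma stp_mono: "v \<le> v' \<Longrightarrow> stp g l m \<eta> h v \<le> stp g l m \<eta> h v'"
  unfolding stp_def by (cases "v = v'") auto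

lemma compare:
  assumes ED: "is_divisor g l m E" and EE: "effective E"
    and bg: "b \<le> g"
    and cond: "\<forall>h. a \<le> h \<and> h < b \<and> ec E (g - h) = 0 \<longrightarrow>
        congr l m (g - h) (\<eta> (g - h)) (l (g - h) * of_int (Rc E (g - h) + \<delta>))"
    and init: "v \<le> Rc E (g - a) + \<delta>"
  shows "a + j \<le> b \<Longrightarrow> rf g l m \<eta> v a j \<le> Rc E (g - (a + j)) + \<delta>"
proof (induction j)
  case 0 thus ?case using init by simp
next
  case (Suc j)
  define h where "h = a + j"
  have hb: "h < b" using Suc.prems unfolding h_def by simp
  hence hg: "h < g" using bg by simp
  define i where "i = g - h"
  have i1: "1 \<le> i" using hg unfolding i_def by simp
  have eqi: "g - (a + Suc j) = i - 1" unfolding i_def h_def by simp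
  have IH: "rf g l m \<eta> v a j \<le> Rc E i + \<delta>" using Suc unfolding i_def h_def by simp
  have step: "Rc E (i - 1) = Rc E i + ec E i" by (rule Rc_step[OF ED EE i1])
  define u where "u = rf g l m \<eta> v a j"
  have "stp g l m \<eta> h u \<le> Rc E (i - 1) + \<delta>"
  proof (cases "ec E i = 0")
    case True
    hence c: "congr l m i (\<eta> i) (l i * of_int (Rc E i + \<delta>))"
      using cond hb unfolding i_def h_def by auto
    show ?thesis
    proof (cases "u = Rc E i + \<delta>")
      case True
      hence "stp g l m \<eta> h u = u" using c unfolding stp_def i_def by simp
      thus ?thesis using True step \<open>ec E i = 0\<close> by simp
    next
      case False
      hence "u < Rc E i + \<delta>" using IH unfolding u_def by simp
      thus ?thesis using stp_bounds(2)[of g l m \<eta> h u] step \<open>ec E i = 0\<close> by simp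
    qed
  next
    case False
    hence "1 \<le> ec E i" using ec_nonneg[OF ED EE, of i] by simp
    thus ?thesis using stp_bounds(2)[of g l m \<eta> h u] step IH unfolding u_def by simp
  qed
  thus ?case unfolding u_def h_def eqi by simp
qed

lemma wr_mono: "wr g l m \<xi> h \<le> wr g l m \<xi> (Suc h)"
  using stp_bounds(1)[of "wr g l m \<xi> h" g l m \<xi> h] by simp

lemma wr_mono': "h \<le> h' \<Longrightarrow> wr g l m \<xi> h \<le> wr g l m \<xi> h'"
proof (induction h' rule: dec_induct)
  case (step n) thus ?case using wr_mono[of g l m \<xi> n] by linarith
qed simp

lemma envelope:
  "1 \<le> h \<Longrightarrow> \<exists>h0<h. wr g l m \<xi> h \<le> rf g l m \<xi> (rf g l m \<xi> 0 0 h0 + 2) (Suc h0) (h - Suc h0)"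
proof (induction h)
  case 0 thus ?case by simp
next
  case (Suc h)
  let ?c = "rf g l m \<xi> 0 0 h + 2"
  show ?case
  proof (cases "stp g l m \<xi> h (wr g l m \<xi> h) \<le> ?c")
    case True
    thus ?thesis by (intro exI[of _ h]) simp
  next
    case False
    hence h1: "1 \<le> h" using stp_bounds(2)[of g l m \<xi> 0 1] by (cases h) auto
    then obtain h0 where h0: "h0 < h" "wr g l m \<xi> h \<le> rf g l m \<xi> (rf g l m \<xi> 0 0 h0 + 2) (Suc h0) (h - Suc h0)"
      using Suc.IH by blast
    have e: "Suc h - Suc h0 = Suc (h - Suc h0)" and e2: "Suc (h0 + (h - Suc h0)) = h" using h0 by auto
    have "wr g l m \<xi> (Suc h) = stp g l m \<xi> h (wr g l m \<xi> h)" using False by simp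
    also have "\<dots> \<le> stp g l m \<xi> h (rf g l m \<xi> (rf g l m \<xi> 0 0 h0 + 2) (Suc h0) (h - Suc h0))"
      by (rule stp_mono[OF h0(2)])
    also have "\<dots> = rf g l m \<xi> (rf g l m \<xi> 0 0 h0 + 2) (Suc h0) (Suc h - Suc h0)"
      unfolding e by (simp add: e2)
    finally show ?thesis using h0(1) by (intro exI[of _ h0]) simp
  qed
qed


lemma gen_helper:
  assumes gen: "generic_chain g l m" and i: "i \<in> {1..g}"
    and ab: "b < a" "a - b \<le> 2 * int g - 2"
    and z: "real_of_int (a - b) * l i = of_int z * (l i + m i)"
  shows False
proof -
  have lp: "0 < l i" and mp: "0 < m i" using gen i unfolding generic_chain_def by auto
  define k where "k = a - b"
  have kp: "0 < k" using ab unfolding k_def by simp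
  have eq: "real_of_int (k - z) * l i = of_int z * m i" using z unfolding k_def by (simp add: algebra_simps)
  have zp: "0 < z"
  proof (rule ccontr)
    assume "\<not> 0 < z"
    hence "of_int z * m i \<le> 0" using mp by (simp add: mult_nonpos_nonneg)
    moreover have "0 < real_of_int (k - z) * l i" using kp \<open>\<not> 0 < z\<close> lp by simp
    ultimately show False using eq by simp
  qed
  have zk: "z < k"
  proof (rule ccontr)
    assume "\<not> z < k"
    hence "real_of_int (k - z) * l i \<le> 0" using lp by (simp add: mult_nonpos_nonneg)
    moreover have "0 < of_int z * m i" using zp mp by simp
    ultimately show False using eq by simp
  qed
  define A where "A = nat z"
  define B where "B = nat (k - z)"
  have A: "real A = of_int z" "0 < A" unfolding A_def using zp by auto
  have B: "real B = of_int (k - z)" "0 < B" unfolding B_def using zk by auto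
  have "A + B \<le> 2 * g - 2" unfolding A_def B_def using ab zp zk unfolding k_def by linarith
  hence ne: "l i / m i \<noteq> real A / real B" using gen i A(2) B(2) unfolding generic_chain_def by blast
  have "real B * l i = real A * m i" using eq A B by simp
  hence "l i / m i = real A / real B" using mp B(2) by (simp add: field_simps)
  thus False using ne by simp
qed

lemma gen_inj:
  assumes gen: "generic_chain g l m" and i: "i \<in> {1..g}"
    and ab: "\<bar>a - b\<bar> \<le> 2 * int g - 2"
    and c: "congr l m i (l i * of_int a) (l i * of_int b)"
  shows "a = b"
proof (rule ccontr)
  assume ne: "a \<noteq> b"
  obtain z :: int where z: "l i * of_int a - l i * of_int b = of_int z * circ l m i"
    using c unfolding congr_def by blast
  show False
  proof (cases "b < a")
    case True
    show False by (rule gen_helper[OF gen i True, of z]) (use ab z in \<open>auto simp: circ_def algebra_simps\<close>)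
  next
    case False
    hence "a < b" using ne by simp
    show False by (rule gen_helper[OF gen i \<open>a < b\<close>, of "-z"]) (use ab z in \<open>auto simp: circ_def algebra_simps\<close>)
  qed
qed

lemma invariant:
  assumes gen: "generic_chain g l m"
    and etarel: "\<forall>h<g. \<forall>v::int. congr l m (g - h) (\<eta> (g - h)) (l (g - h) * of_int v) \<longleftrightarrow>
        congr l m (g - h) (2 * \<xi> (g - h)) (l (g - h) * of_int (2 * int h - v))"
    and wb: "wr g l m \<xi> g \<le> int g - 1"
  shows "h \<le> g \<Longrightarrow> 2 * int h - rf g l m \<eta> 0 0 h \<le> rf g l m \<xi> 0 0 h + wr g l m \<xi> h
     \<and> rf g l m \<xi> 0 0 h < wr g l m \<xi> h \<and> 0 \<le> rf g l m \<xi> 0 0 h \<and> rf g l m \<xi> 0 0 h \<le> int h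
     \<and> 0 \<le> rf g l m \<eta> 0 0 h \<and> rf g l m \<eta> 0 0 h \<le> int h"
proof (induction h)
  case 0 thus ?case by simp
next
  case (Suc h)
  have hg: "h < g" using Suc.prems by simp
  define c where "c = rf g l m \<xi> 0 0 h"
  define w where "w = wr g l m \<xi> h"
  define s where "s = rf g l m \<eta> 0 0 h"
  define i where "i = g - h"
  have i: "i \<in> {1..g}" using hg unfolding i_def by auto
  have IH: "2 * int h - s \<le> c + w" "c < w" "0 \<le> c" "c \<le> int h" "0 \<le> s" "s \<le> int h"
    using Suc hg unfolding c_def w_def s_def by auto
  have wle: "w \<le> int g - 1" using wr_mono'[of h g g l m \<xi>] hg wb unfolding w_def by simp
  define C where "C = congr l m i (\<xi> i) (l i * of_int c)"
  define W where "W = congr l m i (\<xi> i) (l i * of_int w)"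
  define H where "H = congr l m i (\<eta> i) (l i * of_int s)"
  define T where "T = 2 * int h - s"
  have H': "H \<longleftrightarrow> congr l m i (2 * \<xi> i) (l i * of_int T)"
    using etarel hg unfolding H_def T_def i_def by blast
  have notCW: "\<not> (C \<and> W)"
  proof
    assume "C \<and> W"
    hence "congr l m i (l i * of_int c) (l i * of_int w)" unfolding C_def W_def
      by (meson congr_sym congr_trans)
    moreover have "\<bar>c - w\<bar> \<le> 2 * int g - 2" using IH wle by simp
    ultimately have "c = w" using gen_inj[OF gen i] by blast
    thus False using IH by simp
  qed
  have CH: "C \<Longrightarrow> H \<Longrightarrow> T = 2 * c"
  proof -
    assume C H
    have "congr l m i (2 * \<xi> i) (2 * (l i * of_int c))" using \<open>C\<close> unfolding C_def by (rule congr_double)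
    hence "congr l m i (l i * of_int T) (l i * of_int (2 * c))"
      using \<open>H\<close> H' by (metis congr_sym congr_trans mult.left_commute of_int_mult of_int_numeral)
    moreover have "\<bar>T - 2 * c\<bar> \<le> 2 * int g - 2" using IH hg unfolding T_def by simp
    ultimately show "T = 2 * c" using gen_inj[OF gen i] by blast
  qed
  have WH: "W \<Longrightarrow> H \<Longrightarrow> False"
  proof -
    assume W H
    have "congr l m i (2 * \<xi> i) (2 * (l i * of_int w))" using \<open>W\<close> unfolding W_def by (rule congr_double)
    hence "congr l m i (l i * of_int T) (l i * of_int (2 * w))"
      using \<open>H\<close> H' by (metis congr_sym congr_trans mult.left_commute of_int_mult of_int_numeral)
    moreover have "\<bar>T - 2 * w\<bar> \<le> 2 * int g - 2" using IH hg wle unfolding T_def by simp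
    ultimately have "T = 2 * w" using gen_inj[OF gen i] by blast
    thus False using IH unfolding T_def by simp
  qed
  have c': "rf g l m \<xi> 0 0 (Suc h) = c + (if C then 0 else 1)"
    unfolding c_def C_def i_def by (simp add: stp_def)
  have w': "wr g l m \<xi> (Suc h) = max (w + (if W then 0 else 1)) (c + 2)"
    unfolding c_def w_def W_def i_def by (simp add: stp_def)
  have s': "rf g l m \<eta> 0 0 (Suc h) = s + (if H then 0 else 1)"
    unfolding s_def H_def i_def by (simp add: stp_def)
  show ?case unfolding c' w' s'
    using IH notCW CH WH unfolding T_def by (cases C; cases W; cases H) auto
qed


lemma vtx_eq: "1 \<le> i \<Longrightarrow> i < g \<Longrightarrow> vtx g l i = (Suc i, 0)"
  unfolding vtx_def loc_def by simp

lemma canon_eq: "canonical g l p = (if p \<in> (\<lambda>i. (Suc i, 0::real)) ` {1..<g} then 2 else 0)"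
proof -
  have "(\<exists>i\<in>{1..<g}. p = vtx g l i) \<longleftrightarrow> p \<in> (\<lambda>i. (Suc i, 0::real)) ` {1..<g}"
    using vtx_eq by auto
  thus ?thesis unfolding canonical_def by simp
qed

lemma supp_canon: "supp (canonical g l) = (\<lambda>i. (Suc i, 0::real)) ` {1..<g}"
  unfolding supp_def canon_eq by auto

lemma canon_divisor:
  assumes pos: "\<forall>i\<in>{1..g}. 0 < l i \<and> 0 < m i"
  shows "is_divisor g l m (canonical g l)"
proof -
  have "(\<lambda>i. (Suc i, 0::real)) ` {1..<g} \<subseteq> Pts g l m"
  proof
    fix p assume "p \<in> (\<lambda>i. (Suc i, 0::real)) ` {1..<g}"
    then obtain i where i: "i \<in> {1..<g}" "p = (Suc i, 0)" by auto
    have "p = loc g l i (l i)" using i unfolding loc_def by simp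
    moreover have "0 < l i \<and> 0 < m i" using pos i by auto
    hence "0 \<le> l i \<and> l i < circ l m i" unfolding circ_def by auto
    ultimately show "p \<in> Pts g l m" unfolding Pts_def using i by (simp only: mem_Collect_eq) (metis atLeastLessThan_iff less_imp_le_nat)
  qed
  thus ?thesis unfolding is_divisor_def using supp_canon[of g l, unfolded supp_def] by simp
qed

lemma inj_Suc0: "inj_on (\<lambda>i. (Suc i, 0::real)) A" by (auto intro: inj_onI)

lemma canon_deg: assumes that: "1 \<le> g " shows "deg (canonical g l) = 2 * (int g - 1)"
proof -
  have "deg (canonical g l) = (\<Sum>p\<in>(\<lambda>i. (Suc i, 0::real)) ` {1..<g}. canonical g l p)"
    unfolding deg_def using supp_canon[of g l, unfolded supp_def] by simp
  also have "\<dots> = (\<Sum>i\<in>{1..<g}. canonical g l (Suc i, 0))" by (simp add: sum.reindex[OF inj_Suc0])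
  also have "\<dots> = (\<Sum>i\<in>{1..<g}. 2)" by (rule sum.cong) (auto simp: canon_eq)
  also have "\<dots> = 2 * (int g - 1)" using that by (cases g) auto
  finally show ?thesis .
qed

lemma canon_Aj:
  assumes j: "j \<in> {1..g}"
  shows "Aj l j (canonical g l) = 2 * real (g - j) * l j"
proof -
  have "Aj l j (canonical g l) = (\<Sum>p\<in>(\<lambda>i. (Suc i, 0::real)) ` {1..<g}. real_of_int (canonical g l p) * proj l j p)"
    unfolding Aj_def supp_canon ..
  also have "\<dots> = (\<Sum>i\<in>{1..<g}. real_of_int (canonical g l (Suc i, 0)) * proj l j (Suc i, 0))"
    by (simp add: sum.reindex[OF inj_Suc0])
  also have "\<dots> = (\<Sum>i\<in>{1..<g}. 2 * proj l j (Suc i, 0))" by (rule sum.cong) (auto simp: canon_eq)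
  also have "\<dots> = (\<Sum>i\<in>{1..<g}. if j \<le> i then 2 * l j else 0)"
    by (rule sum.cong) (use j in \<open>auto simp: proj_def\<close>)
  also have "\<dots> = (\<Sum>i\<in>{i \<in> {1..<g}. j \<le> i}. 2 * l j)" by (rule sum.inter_filter[symmetric]) simp
  also have "{i \<in> {1..<g}. j \<le> i} = {j..<g}" using j by auto
  also have "(\<Sum>i\<in>{j..<g}. 2 * l j) = 2 * real (g - j) * l j" by simp
  finally show ?thesis .
qed

definition delta :: "nat \<times> real \<Rightarrow> divisor" where
  "delta q = (\<lambda>p. if p = q then 1 else 0)"

lemma delta_facts:
  assumes "q \<in> Pts g l m"
  shows "is_divisor g l m (delta q)" "effective (delta q)" "deg (delta q) = 1" "Aj l j (delta q) = proj l j q"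
    "supp (delta q) = {q}"
proof -
  show s: "supp (delta q) = {q}" unfolding supp_def delta_def by auto
  show "is_divisor g l m (delta q)" using assms s unfolding is_divisor_def supp_def by simp
  show "effective (delta q)" unfolding effective_def delta_def by simp
  show "deg (delta q) = 1" unfolding deg_def using s[unfolded supp_def] by (simp add: delta_def)
  show "Aj l j (delta q) = proj l j q" unfolding Aj_def s by (simp add: delta_def)
qed

lemma choose_t:
  fixes n a :: real
  assumes n: "0 < n" and V: "finite V"
  shows "\<exists>t. 0 \<le> t \<and> t < n \<and> t \<noteq> a \<and> (\<forall>v\<in>V. \<not> (\<exists>z::int. v - t = of_int z * n))"
proof -
  define Bad where "Bad = insert a ((\<lambda>v. v - n * of_int \<lfloor>v / n\<rfloor>) ` V)"
  have fB: "finite Bad" unfolding Bad_def using V by simp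
  have "\<not> {0..<n} \<subseteq> Bad" using fB infinite_Ico[OF n] finite_subset by blast
  then obtain t where "t \<in> {0..<n}" "t \<notin> Bad" by blast
  hence t: "0 \<le> t" "t < n" "t \<notin> Bad" by auto
  have "\<forall>v\<in>V. \<not> (\<exists>z::int. v - t = of_int z * n)"
  proof (intro ballI notI)
    fix v assume v: "v \<in> V" and "\<exists>z::int. v - t = of_int z * n"
    then obtain z :: int where z: "v - t = of_int z * n" by blast
    have "v / n = of_int z + t / n" using z n by (simp add: field_simps)
    moreover have "0 \<le> t / n" "t / n < 1" using t n by auto
    ultimately have "\<lfloor>v / n\<rfloor> = z" by (intro floor_unique) auto
    hence "t = v - n * of_int \<lfloor>v / n\<rfloor>" using z by (simp add: algebra_simps)
    hence "t \<in> Bad" unfolding Bad_def using v by auto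
    thus False using t by simp
  qed
  moreover have "t \<noteq> a" using t unfolding Bad_def by auto
  ultimately show ?thesis using t by blast
qed

lemma divisor_lincomb:
  assumes "is_divisor g l m X" "is_divisor g l m Y"
  shows "is_divisor g l m (\<lambda>p. a * X p + b * Y p)"
proof -
  have "{p. a * X p + b * Y p \<noteq> 0} \<subseteq> {p. X p \<noteq> 0} \<union> {p. Y p \<noteq> 0}" by auto
  thus ?thesis using assms unfolding is_divisor_def by (meson finite_UnI finite_subset le_sup_iff order_trans)
qed

lemma fin_supp: "is_divisor g l m X \<Longrightarrow> finite (supp X)"
  unfolding is_divisor_def supp_def by simp

lemma v0_Pts: assumes "1 \<le> g" "0 < l 1" "0 < m 1" shows "(1, 0) \<in> Pts g l m"
proof -
  have "(1::nat, 0::real) = loc g l 1 0" unfolding loc_def using assms by simp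
  moreover have "(0::real) < circ l m 1" unfolding circ_def using assms by simp
  ultimately show ?thesis unfolding Pts_def using assms(1) by (simp only: mem_Collect_eq) (metis order.refl)
qed

lemma rank_points:
  assumes pos: "\<forall>i\<in>{1..g}. 0 < l i \<and> 0 < m i" and g1: "1 \<le> g"
    and DD: "is_divisor g l m D" and rk: "1 \<le> rank g l m D" and q: "q \<in> Pts g l m"
  shows "\<exists>E'. is_divisor g l m E' \<and> effective E' \<and> deg E' \<le> deg D - 1 \<and>
     (\<forall>j\<in>{1..g}. congr l m j (Aj l j D - proj l j q) (Aj l j E'))"
proof -
  define v0 where "v0 = (1::nat, 0::real)"
  have v0: "v0 \<in> Pts g l m" unfolding v0_def using v0_Pts[OF g1] pos g1 by auto
  note dv = delta_facts[OF v0]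
  note dq = delta_facts[OF q]
  have pv0: "\<And>j. j \<in> {1..g} \<Longrightarrow> proj l j v0 = 0" unfolding proj_def v0_def by auto
  have bound: "int r \<le> deg D" if rr: "rank_ge g l m D r" for r
  proof -
    define F where "F = (\<lambda>p. int r * delta v0 p + 0 * delta v0 p)"
    have FD: "is_divisor g l m F" unfolding F_def by (rule divisor_lincomb[OF dv(1) dv(1)])
    have FE: "effective F" using dv(2) unfolding F_def effective_def by simp
    have Fdeg: "deg F = int r" unfolding F_def
      using lincomb(1)[OF fin_supp[OF dv(1)] fin_supp[OF dv(1)], where a="int r" and b=0] dv(3) by simp
    obtain E' where E': "is_divisor g l m E'" "effective E'" "lin_equiv g l m (\<lambda>p. D p - F p) E'"
      using rr FD FE Fdeg unfolding rank_ge_def by blast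
    have XD: "is_divisor g l m (\<lambda>p. 1 * D p + (-1) * F p)" by (rule divisor_lincomb[OF DD FD])
    hence XD': "is_divisor g l m (\<lambda>p. D p - F p)" by simp
    have "deg (\<lambda>p. D p - F p) = deg E'" by (rule lin_equiv_inv(1)[OF pos XD' E'(1) E'(3)])
    moreover have "deg (\<lambda>p. 1 * D p + (-1) * F p) = deg D - deg F"
      using lincomb(1)[OF fin_supp[OF DD] fin_supp[OF FD], where a=1 and b="-1"] by simp
    ultimately show ?thesis using deg_nonneg[OF E'(1,2)] Fdeg by simp
  qed
  have r0: "rank_ge g l m D 0" and G1: "1 \<le> (GREATEST r. rank_ge g l m D r)"
    using rk unfolding rank_def by (auto split: if_splits)
  define r0 where "r0 = (GREATEST r. rank_ge g l m D r)"
  have rr0: "rank_ge g l m D r0" unfolding r0_def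
    by (rule GreatestI_nat[where P="rank_ge g l m D" and b="nat (deg D)", OF r0]) (use bound in force)
  have r01: "1 \<le> r0" using G1 unfolding r0_def .
  define F where "F = (\<lambda>p. 1 * delta q p + (int r0 - 1) * delta v0 p)"
  have FD: "is_divisor g l m F" unfolding F_def by (rule divisor_lincomb[OF dq(1) dv(1)])
  have FE: "effective F" using dv(2) dq(2) r01 unfolding F_def effective_def by simp
  have Fdeg: "deg F = int r0" unfolding F_def
    using lincomb(1)[OF fin_supp[OF dq(1)] fin_supp[OF dv(1)], where a=1 and b="int r0 - 1"] dv(3) dq(3) by simp
  have FA: "\<And>j. j \<in> {1..g} \<Longrightarrow> Aj l j F = proj l j q" unfolding F_def
    using lincomb(2)[OF fin_supp[OF dq(1)] fin_supp[OF dv(1)], where a=1 and b="int r0 - 1"] dv(4) dq(4) pv0 by simp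
  obtain E' where E': "is_divisor g l m E'" "effective E'" "lin_equiv g l m (\<lambda>p. D p - F p) E'"
    using rr0 FD FE Fdeg unfolding rank_ge_def by blast
  have XD: "is_divisor g l m (\<lambda>p. 1 * D p + (-1) * F p)" by (rule divisor_lincomb[OF DD FD])
  hence XD': "is_divisor g l m (\<lambda>p. D p - F p)" by simp
  have "deg (\<lambda>p. D p - F p) = deg E'" by (rule lin_equiv_inv(1)[OF pos XD' E'(1) E'(3)])
  moreover have "deg (\<lambda>p. 1 * D p + (-1) * F p) = deg D - deg F"
    using lincomb(1)[OF fin_supp[OF DD] fin_supp[OF FD], where a=1 and b="-1"] by simp
  ultimately have dE: "deg E' \<le> deg D - 1" using Fdeg r01 by simp
  have "\<forall>j\<in>{1..g}. congr l m j (Aj l j D - proj l j q) (Aj l j E')"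
  proof
    fix j assume j: "j \<in> {1..g}"
    have "congr l m j (Aj l j (\<lambda>p. D p - F p)) (Aj l j E')"
      by (rule lin_equiv_inv(2)[OF pos XD' E'(1) E'(3) j])
    moreover have "Aj l j (\<lambda>p. 1 * D p + (-1) * F p) = Aj l j D - Aj l j F"
      using lincomb(2)[OF fin_supp[OF DD] fin_supp[OF FD], where a=1 and b="-1"] by simp
    ultimately show "congr l m j (Aj l j D - proj l j q) (Aj l j E')" using FA[OF j] by simp
  qed
  thus ?thesis using E'(1,2) dE by blast
qed


lemma congr_shift: "congr l m j (x - c) y \<Longrightarrow> congr l m j x (y + c)"
  unfolding congr_def by (simp add: algebra_simps)

lemma Rc_le_deg:
  assumes "is_divisor g l m E" "effective E"
  shows "Rc E j \<le> deg E"
proof -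
  have "Rc E j \<le> Rc E 0" unfolding Rc_def
    by (rule sum_mono2) (use finE[OF assms] nonnegE[OF assms] in auto)
  thus ?thesis using Rc0[OF assms] by simp
qed

lemma path_bound:
  assumes gen: "generic_chain g l m" and g1: "1 \<le> g"
    and DD: "is_divisor g l m D" and rk: "1 \<le> rank g l m D" and dle: "deg D \<le> int g - 1"
    and h0: "h0 < g"
  shows "rf g l m (\<lambda>j. Aj l j D) (rf g l m (\<lambda>j. Aj l j D) 0 0 h0 + 2) (Suc h0) (g - Suc h0) \<le> deg D"
proof -
  have pos: "\<forall>i\<in>{1..g}. 0 < l i \<and> 0 < m i" using gen unfolding generic_chain_def by auto
  define \<xi> where "\<xi> = (\<lambda>j. Aj l j D)"
  define k where "k = g - h0"
  have k: "k \<in> {1..g}" using h0 unfolding k_def by auto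
  have "0 < l k" "0 < m k" using pos k by auto
  hence npos: "0 < circ l m k" unfolding circ_def by simp
  define V where "V = (\<lambda>s. \<xi> k - l k * of_int s) ` {0..2 * int g}"
  have fV: "finite V" unfolding V_def by simp
  obtain t where t: "0 \<le> t" "t < circ l m k" "t \<noteq> l k"
    and tV: "\<forall>v\<in>V. \<not> (\<exists>z::int. v - t = of_int z * circ l m k)"
    using choose_t[OF npos fV, of "l k"] by blast
  define p where "p = (k, t)"
  have ploc: "p = loc g l k t" unfolding p_def loc_def using t by simp
  have pP: "p \<in> Pts g l m" unfolding Pts_def using ploc k t by (simp only: mem_Collect_eq) (metis atLeastAtMost_iff)
  obtain E' where E': "is_divisor g l m E'" "effective E'" "deg E' \<le> deg D - 1"
    and cE: "\<forall>j\<in>{1..g}. congr l m j (\<xi> j - proj l j p) (Aj l j E')"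
    using rank_points[OF pos g1 DD rk pP] unfolding \<xi>_def by blast
  have projp: "\<And>j. proj l j p = (if k < j then 0 else if k = j then t else l j)"
    unfolding proj_def p_def by simp
  have pa: "rf g l m \<xi> 0 0 h0 \<le> Rc E' k + 0"
  proof -
    have "rf g l m \<xi> 0 0 h0 \<le> Rc E' (g - (0 + h0)) + 0"
    proof (rule compare[OF E'(1,2), where b=h0 and a=0 and j=h0 and \<delta>=0 and v=0 and \<eta>=\<xi>])
      show "h0 \<le> g" using h0 by simp
      show "0 \<le> Rc E' (g - 0) + 0" using Rc_nonneg[OF E'(1,2)] by simp
      show "\<forall>h. 0 \<le> h \<and> h < h0 \<and> ec E' (g - h) = 0 \<longrightarrow>
        congr l m (g - h) (\<xi> (g - h)) (l (g - h) * of_int (Rc E' (g - h) + 0))"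
      proof (intro allI impI)
        fix h assume hh: "0 \<le> h \<and> h < h0 \<and> ec E' (g - h) = 0"
        have i: "g - h \<in> {1..g}" "k < g - h" using hh h0 unfolding k_def by auto
        have "congr l m (g - h) (\<xi> (g - h) - proj l (g - h) p) (Aj l (g - h) E')" using cE i(1) by blast
        moreover have "proj l (g - h) p = 0" using projp i(2) by simp
        ultimately have "congr l m (g - h) (\<xi> (g - h) - 0) (Aj l (g - h) E')" by simp
        thus "congr l m (g - h) (\<xi> (g - h)) (l (g - h) * of_int (Rc E' (g - h) + 0))"
          using Aj_ec0[OF E'(1,2) conjunct2[OF conjunct2[OF hh]]] by simp
      qed
    qed simp
    thus ?thesis unfolding k_def by simp
  qed
  have eck: "1 \<le> ec E' k"
  proof (rule ccontr)
    assume "\<not> 1 \<le> ec E' k"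
    hence e0: "ec E' k = 0" using ec_nonneg[OF E'(1,2), of k] by simp
    have "congr l m k (\<xi> k - proj l k p) (Aj l k E')" using cE k by blast
    moreover have "proj l k p = t" using projp by simp
    ultimately have "congr l m k (\<xi> k - t) (Aj l k E')" by simp
    hence c: "congr l m k (\<xi> k - t) (l k * of_int (Rc E' k))" using Aj_ec0[OF E'(1,2) e0] by simp
    have "Rc E' k \<in> {0..2 * int g}" using Rc_nonneg[OF E'(1,2), of k] Rc_le_deg[OF E'(1,2), of k] E'(3) dle by auto
    hence "\<xi> k - l k * of_int (Rc E' k) \<in> V" unfolding V_def by auto
    moreover from c obtain z :: int where "\<xi> k - t - l k * of_int (Rc E' k) = of_int z * circ l m k"
      unfolding congr_def by blast
    hence "(\<xi> k - l k * of_int (Rc E' k)) - t = of_int z * circ l m k" by (simp add: algebra_simps)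
    ultimately show False using tV by blast
  qed
  have stepk: "Rc E' (k - 1) = Rc E' k + ec E' k" using Rc_step[OF E'(1,2)] k by simp
  have initc: "rf g l m \<xi> 0 0 h0 + 2 \<le> Rc E' (g - Suc h0) + 1"
  proof -
    have "g - Suc h0 = k - 1" unfolding k_def by simp
    thus ?thesis using pa eck stepk by simp
  qed
  have "rf g l m \<xi> (rf g l m \<xi> 0 0 h0 + 2) (Suc h0) (g - Suc h0) \<le> Rc E' (g - (Suc h0 + (g - Suc h0))) + 1"
  proof (rule compare[OF E'(1,2), where b=g and a="Suc h0" and j="g - Suc h0" and \<delta>=1 and \<eta>=\<xi>])
    show "\<forall>h. Suc h0 \<le> h \<and> h < g \<and> ec E' (g - h) = 0 \<longrightarrow>
        congr l m (g - h) (\<xi> (g - h)) (l (g - h) * of_int (Rc E' (g - h) + 1))"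
    proof (intro allI impI)
      fix h assume hh: "Suc h0 \<le> h \<and> h < g \<and> ec E' (g - h) = 0"
      have i: "g - h \<in> {1..g}" "g - h < k" using hh h0 unfolding k_def by auto
      have "congr l m (g - h) (\<xi> (g - h) - proj l (g - h) p) (Aj l (g - h) E')" using cE i(1) by blast
      moreover have "proj l (g - h) p = l (g - h)" using projp i(2) by simp
      ultimately have "congr l m (g - h) (\<xi> (g - h) - l (g - h)) (Aj l (g - h) E')" by simp
      hence "congr l m (g - h) (\<xi> (g - h) - l (g - h)) (l (g - h) * of_int (Rc E' (g - h)))"
        using Aj_ec0[OF E'(1,2) conjunct2[OF conjunct2[OF hh]]] by simp
      hence "congr l m (g - h) (\<xi> (g - h)) (l (g - h) * of_int (Rc E' (g - h)) + l (g - h))"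
        by (rule congr_shift)
      thus "congr l m (g - h) (\<xi> (g - h)) (l (g - h) * of_int (Rc E' (g - h) + 1))"
        by (simp add: algebra_simps)
    qed
  qed (use initc h0 in simp_all)
  also have "\<dots> = deg E' + 1" using Rc0[OF E'(1,2)] h0 by simp
  also have "\<dots> \<le> deg D" using E'(3) by simp
  finally show ?thesis unfolding \<xi>_def .
qed

theorem theorem1p1:
  fixes g :: nat and l m :: "nat \<Rightarrow> real"
  assumes "1 \<le> g"
    and "generic_chain g l m"
  shows "\<not> (\<exists>D E. is_divisor g l m D \<and> 1 \<le> rank g l m D \<and>
              is_divisor g l m E \<and> effective E \<and>
              lin_equiv g l m (\<lambda>p. canonical g l p - 2 * D p) E)"
proof
  assume "\<exists>D E. is_divisor g l m D \<and> 1 \<le> rank g l m D \<and>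
              is_divisor g l m E \<and> effective E \<and>
              lin_equiv g l m (\<lambda>p. canonical g l p - 2 * D p) E"
  then obtain D E where DD: "is_divisor g l m D" and rk: "1 \<le> rank g l m D"
    and ED: "is_divisor g l m E" and EE: "effective E"
    and le: "lin_equiv g l m (\<lambda>p. canonical g l p - 2 * D p) E" by blast
  note g1 = assms(1) and gen = assms(2)
  have pos: "\<forall>i\<in>{1..g}. 0 < l i \<and> 0 < m i" using gen unfolding generic_chain_def by auto
  have KD: "is_divisor g l m (canonical g l)" by (rule canon_divisor[OF pos])
  have XD: "is_divisor g l m (\<lambda>p. 1 * canonical g l p + (-2) * D p)" by (rule divisor_lincomb[OF KD DD])
  hence XD': "is_divisor g l m (\<lambda>p. canonical g l p - 2 * D p)" by simp
  define \<xi> where "\<xi> = (\<lambda>j. Aj l j D)"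
  define d where "d = deg D"
  have "deg (\<lambda>p. canonical g l p - 2 * D p) = deg E" by (rule lin_equiv_inv(1)[OF pos XD' ED le])
  moreover have "deg (\<lambda>p. 1 * canonical g l p + (-2) * D p) = deg (canonical g l) - 2 * deg D"
    using lincomb(1)[OF fin_supp[OF KD] fin_supp[OF DD], where a=1 and b="-2"] by simp
  ultimately have degE: "deg E = 2 * (int g - 1) - 2 * d" using canon_deg[OF g1] unfolding d_def by simp
  have dle: "d \<le> int g - 1" using deg_nonneg[OF ED EE] degE by simp
  define \<eta> where "\<eta> = (\<lambda>j. 2 * real (g - j) * l j - 2 * \<xi> j)"
  have cE: "congr l m j (\<eta> j) (Aj l j E)" if j: "j \<in> {1..g}" for j
  proof -
    have "congr l m j (Aj l j (\<lambda>p. canonical g l p - 2 * D p)) (Aj l j E)"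
      by (rule lin_equiv_inv(2)[OF pos XD' ED le j])
    moreover have "Aj l j (\<lambda>p. 1 * canonical g l p + (-2) * D p) = Aj l j (canonical g l) - 2 * Aj l j D"
      using lincomb(2)[OF fin_supp[OF KD] fin_supp[OF DD], where a=1 and b="-2"] by simp
    ultimately show ?thesis using canon_Aj[OF j] unfolding \<eta>_def \<xi>_def by simp
  qed
  obtain h0 where h0: "h0 < g"
    and wle: "wr g l m \<xi> g \<le> rf g l m \<xi> (rf g l m \<xi> 0 0 h0 + 2) (Suc h0) (g - Suc h0)"
    using envelope[OF g1] by blast
  have wd: "wr g l m \<xi> g \<le> d"
    using wle path_bound[OF gen g1 DD rk _ h0] dle unfolding \<xi>_def d_def by fastforce
  have sle: "rf g l m \<eta> 0 0 g \<le> Rc E (g - (0 + g)) + 0"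
  proof (rule compare[OF ED EE, where b=g and a=0 and j=g and \<delta>=0 and v=0 and \<eta>=\<eta>])
    show "\<forall>h. 0 \<le> h \<and> h < g \<and> ec E (g - h) = 0 \<longrightarrow>
        congr l m (g - h) (\<eta> (g - h)) (l (g - h) * of_int (Rc E (g - h) + 0))"
    proof (intro allI impI)
      fix h assume hh: "0 \<le> h \<and> h < g \<and> ec E (g - h) = 0"
      have i: "g - h \<in> {1..g}" using hh by auto
      show "congr l m (g - h) (\<eta> (g - h)) (l (g - h) * of_int (Rc E (g - h) + 0))"
        using cE[OF i] Aj_ec0[OF ED EE conjunct2[OF conjunct2[OF hh]]] by simp
    qed
  qed (use Rc_nonneg[OF ED EE] in simp_all)
  hence sg: "rf g l m \<eta> 0 0 g \<le> deg E" using Rc0[OF ED EE] by simp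
  have etarel: "\<forall>h<g. \<forall>v::int. congr l m (g - h) (\<eta> (g - h)) (l (g - h) * of_int v) \<longleftrightarrow>
        congr l m (g - h) (2 * \<xi> (g - h)) (l (g - h) * of_int (2 * int h - v))"
  proof (intro allI impI)
    fix h :: nat and v :: int assume h: "h < g"
    have e: "\<eta> (g - h) = 2 * real h * l (g - h) - 2 * \<xi> (g - h)" unfolding \<eta>_def using h by simp
    show "congr l m (g - h) (\<eta> (g - h)) (l (g - h) * of_int v) \<longleftrightarrow>
        congr l m (g - h) (2 * \<xi> (g - h)) (l (g - h) * of_int (2 * int h - v))"
      unfolding congr_def e
    proof
      assume "\<exists>z::int. 2 * real h * l (g - h) - 2 * \<xi> (g - h) - l (g - h) * of_int v = of_int z * circ l m (g - h)"
      then obtain z :: int where z: "2 * real h * l (g - h) - 2 * \<xi> (g - h) - l (g - h) * of_int v = of_int z * circ l m (g - h)" by blast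
      have "2 * \<xi> (g - h) - l (g - h) * of_int (2 * int h - v) = of_int (- z) * circ l m (g - h)"
        using z by (simp add: algebra_simps)
      thus "\<exists>z::int. 2 * \<xi> (g - h) - l (g - h) * of_int (2 * int h - v) = of_int z * circ l m (g - h)" by blast
    next
      assume "\<exists>z::int. 2 * \<xi> (g - h) - l (g - h) * of_int (2 * int h - v) = of_int z * circ l m (g - h)"
      then obtain z :: int where z: "2 * \<xi> (g - h) - l (g - h) * of_int (2 * int h - v) = of_int z * circ l m (g - h)" by blast
      have "2 * real h * l (g - h) - 2 * \<xi> (g - h) - l (g - h) * of_int v = of_int (- z) * circ l m (g - h)"
        using z by (simp add: algebra_simps)
      thus "\<exists>z::int. 2 * real h * l (g - h) - 2 * \<xi> (g - h) - l (g - h) * of_int v = of_int z * circ l m (g - h)" by blast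
    qed
  qed
  have wb: "wr g l m \<xi> g \<le> int g - 1" using wd dle by simp
  have inv: "2 * int g - rf g l m \<eta> 0 0 g \<le> rf g l m \<xi> 0 0 g + wr g l m \<xi> g
     \<and> rf g l m \<xi> 0 0 g < wr g l m \<xi> g"
    using invariant[OF gen etarel wb, of g] by simp
  define cc where "cc = rf g l m \<xi> 0 0 g"
  define ww where "ww = wr g l m \<xi> g"
  define ss where "ss = rf g l m \<eta> 0 0 g"
  have a1: "2 * int g - ss \<le> cc + ww" "cc < ww" using inv unfolding cc_def ww_def ss_def by auto
  have a2: "ss \<le> 2 * (int g - 1) - 2 * d" using sg degE unfolding ss_def by simp
  have a3: "ww \<le> d" using wd unfolding ww_def .
  show False using a1 a2 a3 by presburger
qed


end
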